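(* Let $r$ be a positive integer. Every $r$-outdegree-critical tournament is strongly connected.
   Context: A tournament is an orientation of a finite complete graph. A digraph is called $r$-outdegree-critical if it has minimum outdegree $r$ and the deletion of any vertex decreases the minimum outdegree (i.e., the minimum outdegree of the digraph obtained by deleting any single vertex is less than $r$). A digraph is strongly connected if for every ordered pair of vertices $x,y$ there is a directed path from $x$ to $y$. *)

theory Defs
  imports Main
begin

text \<open>A digraph is given by a finite vertex set V and an arc relation A
  (A u v means there is an arc u -> v); only arcs between vertices of V count.\<close>

definition tournament :: "'a set \<Rightarrow> ('a \<Rightarrow> 'a \<Rightarrow> bool) \<Rightarrow> bool" where
  "tournament V A \<longleftrightarrow> finite V \<and> (\<forall>v\<in>V. \<not> A v v) \<and>
     (\<forall>u\<in>V. \<forall>v\<in>V. u \<noteq> v \<longrightarrow> (A u v \<longleftrightarrow> \<not> A v u))"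

definition outdeg :: "'a set \<Rightarrow> ('a \<Rightarrow> 'a \<Rightarrow> bool) \<Rightarrow> 'a \<Rightarrow> nat" where
  "outdeg V A v = card {w \<in> V. A v w}"

definition min_outdeg :: "'a set \<Rightarrow> ('a \<Rightarrow> 'a \<Rightarrow> bool) \<Rightarrow> nat" where
  "min_outdeg V A = Min (outdeg V A ` V)"

definition outdeg_critical :: "nat \<Rightarrow> 'a set \<Rightarrow> ('a \<Rightarrow> 'a \<Rightarrow> bool) \<Rightarrow> bool" where
  "outdeg_critical r V A \<longleftrightarrow> V \<noteq> {} \<and> min_outdeg V A = r \<and>
     (\<forall>v\<in>V. \<exists>w\<in>V - {v}. outdeg (V - {v}) A w < r)"

definition strongly_connected :: "'a set \<Rightarrow> ('a \<Rightarrow> 'a \<Rightarrow> bool) \<Rightarrow> bool" where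
  "strongly_connected V A \<longleftrightarrow>
     (\<forall>x\<in>V. \<forall>y\<in>V. (x, y) \<in> {(u, v). u \<in> V \<and> v \<in> V \<and> A u v}\<^sup>*)"

end

theory Submission
  imports Defs
begin

theorem lemma2p2:
  fixes r :: nat and V :: "'a set" and A :: "'a \<Rightarrow> 'a \<Rightarrow> bool"
  assumes "r \<ge> 1" and "tournament V A" and "outdeg_critical r V A"
  shows "strongly_connected V A"
proof (rule ccontr)
  define E where "E = {(u, v). u \<in> V \<and> v \<in> V \<and> A u v}"
  assume "\<not> strongly_connected V A"
  hence "\<not> (\<forall>x\<in>V. \<forall>y\<in>V. (x, y) \<in> E\<^sup>*)"
    unfolding strongly_connected_def E_def .
  then obtain x y where xV: "x \<in> V" and yV: "y \<in> V" and nxy: "(x, y) \<notin> E\<^sup>*"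
    by blast
  have fin: "finite V" and irr: "\<forall>v\<in>V. \<not> A v v"
    and tot: "\<forall>u\<in>V. \<forall>v\<in>V. u \<noteq> v \<longrightarrow> (A u v \<longleftrightarrow> \<not> A v u)"
    using assms(2) unfolding tournament_def by blast+
  have ne: "V \<noteq> {}" and md: "min_outdeg V A = r"
    and crit: "\<forall>v\<in>V. \<exists>w\<in>V - {v}. outdeg (V - {v}) A w < r"
    using assms(3) unfolding outdeg_critical_def by auto
  have ge: "outdeg V A w \<ge> r" if "w \<in> V" for w
    using md fin that unfolding min_outdeg_def by (metis Min_le finite_imageI imageI)
  define R where "R = {z. (x, z) \<in> E\<^sup>*}"
  have RV: "R \<subseteq> V"
  proof
    fix z assume "z \<in> R"
    hence "(x, z) \<in> E\<^sup>*" unfolding R_def by simp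
    thus "z \<in> V" using xV by (induction rule: rtrancl_induct) (auto simp: E_def)
  qed
  have clos: "v \<in> R" if "u \<in> R" "A u v" "v \<in> V" for u v
  proof -
    have "(u, v) \<in> E" using that RV unfolding E_def by auto
    thus ?thesis using that(1) unfolding R_def by (auto intro: rtrancl_into_rtrancl)
  qed
  have xR: "x \<in> R" unfolding R_def by simp
  have yR: "y \<notin> R" using nxy unfolding R_def by simp
  have finR: "finite R" using RV fin finite_subset by blast
  have cardR: "card R \<ge> r"
  proof -
    have "{z \<in> V. A x z} \<subseteq> R" using clos xR by auto
    hence "card {z \<in> V. A x z} \<le> card R" using finR card_mono by blast
    thus ?thesis using ge[OF xV] unfolding outdeg_def by simp
  qed
  obtain w where wV: "w \<in> V - {y}" and wlt: "outdeg (V - {y}) A w < r"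
    using crit yV by blast
  show False
  proof (cases "w \<in> R")
    case True
    have "{z \<in> V - {y}. A w z} = {z \<in> V. A w z}"
      using clos[OF True] yR by blast
    thus False using wlt ge[of w] wV unfolding outdeg_def by auto
  next
    case False
    have "R \<subseteq> {z \<in> V - {y}. A w z}"
    proof
      fix z assume zR: "z \<in> R"
      have "z \<noteq> w" using zR False by auto
      moreover have "\<not> A z w" using clos[OF zR] False wV by auto
      moreover have "z \<in> V" "w \<in> V" using zR RV wV by auto
      ultimately have "A w z" using tot by metis
      thus "z \<in> {z \<in> V - {y}. A w z}" using zR RV yR by auto
    qed
    hence "card R \<le> outdeg (V - {y}) A w"
      unfolding outdeg_def using fin by (intro card_mono) auto
    thus False using wlt cardR by simp
  qed
qed

end
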